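(* Let $\mathcal{G}$ and $\mathcal{H}$ be sets and let $G_1,H_1,G_2,H_2,\dots,G_n,H_n$ be random variables forming a Markov chain (in this order), with each $G_i\in\mathcal{G}$ and $H_i\in\mathcal{H}$. Let $v:\mathcal{G}\to\mathbb{R}_{\ge0}$ and $r:\mathcal{H}\to\mathbb{R}$ be functions such that $|r(H_i)|\le a\sqrt{v(G_i)}$ for some constant $a>0$ and $\mathbb{E}[r(H_i)\mid G_i]\le 0$ for all $i$. Then for every $\lambda>0$, $$P\Big(\sum_{i=1}^n\big(r(H_i)-v(G_i)\big)\ge\lambda\Big)\le\exp\Big(-\frac{2}{a^2}\lambda\Big).$$ *)

theory Defs
  imports "HOL-Probability.Probability"
begin

text \<open>Alternating chain G_0, H_0, G_1, H_1, ..., G_(n-1), H_(n-1) (0-indexed).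
  past_before_H M SG SH G H i : sigma-algebra generated by G_0..G_i, H_0..H_(i-1)
  past_before_G M SG SH G H i : sigma-algebra generated by G_0..G_i, H_0..H_i\<close>

definition past_before_H ::
  "'w measure \<Rightarrow> 'g measure \<Rightarrow> 'h measure \<Rightarrow> (nat \<Rightarrow> 'w \<Rightarrow> 'g) \<Rightarrow> (nat \<Rightarrow> 'w \<Rightarrow> 'h) \<Rightarrow> nat \<Rightarrow> 'w measure"
  where "past_before_H M SG SH G H i = sigma (space M)
     ({G j -` A \<inter> space M | j A. j \<le> i \<and> A \<in> sets SG} \<union>
      {H j -` B \<inter> space M | j B. j < i \<and> B \<in> sets SH})"

definition past_through_H ::
  "'w measure \<Rightarrow> 'g measure \<Rightarrow> 'h measure \<Rightarrow> (nat \<Rightarrow> 'w \<Rightarrow> 'g) \<Rightarrow> (nat \<Rightarrow> 'w \<Rightarrow> 'h) \<Rightarrow> nat \<Rightarrow> 'w measure"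
  where "past_through_H M SG SH G H i = sigma (space M)
     ({G j -` A \<inter> space M | j A. j \<le> i \<and> A \<in> sets SG} \<union>
      {H j -` B \<inter> space M | j B. j \<le> i \<and> B \<in> sets SH})"

text \<open>Markov property of the chain G_0, H_0, ..., G_(n-1), H_(n-1): the conditional law of each
  variable given all preceding ones equals its conditional law given the immediately preceding one.\<close>

definition alt_markov_chain ::
  "'w measure \<Rightarrow> 'g measure \<Rightarrow> 'h measure \<Rightarrow> nat \<Rightarrow> (nat \<Rightarrow> 'w \<Rightarrow> 'g) \<Rightarrow> (nat \<Rightarrow> 'w \<Rightarrow> 'h) \<Rightarrow> bool"
  where "alt_markov_chain M SG SH n G H \<longleftrightarrow>
     (\<forall>i<n. G i \<in> measurable M SG) \<and> (\<forall>i<n. H i \<in> measurable M SH) \<and>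
     (\<forall>i<n. \<forall>B\<in>sets SH. AE \<omega> in M.
         real_cond_exp M (past_before_H M SG SH G H i) (\<lambda>x. indicator B (H i x)) \<omega> =
         real_cond_exp M (vimage_algebra (space M) (G i) SG) (\<lambda>x. indicator B (H i x)) \<omega>) \<and>
     (\<forall>i. Suc i < n \<longrightarrow> (\<forall>A\<in>sets SG. AE \<omega> in M.
         real_cond_exp M (past_through_H M SG SH G H i) (\<lambda>x. indicator A (G (Suc i) x)) \<omega> =
         real_cond_exp M (vimage_algebra (space M) (H i) SH) (\<lambda>x. indicator A (G (Suc i) x)) \<omega>))"

end

theory Submission
  imports Defs
begin
lemma cosh_le_exp_sq:
  fixes x :: real assumes "x \<ge> 0" shows "cosh x \<le> exp (x\<^sup>2 / 2)"
proof -
  have "-(2*x) * (1/2) + ln (1 + (1/2) * (exp (2*x) - 1)) \<le> (2*x)\<^sup>2 / 8"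
    using Hoeffdings_lemma_aux[of "2*x" "1/2"] assms by simp
  moreover have "1 + (1/2) * (exp (2*x) - 1) = exp x * cosh x"
    by (simp add: cosh_def exp_add[symmetric] field_simps exp_minus_inverse flip: exp_add)
  moreover have "cosh x > 0" using cosh_real_pos by simp
  ultimately have "ln (cosh x) \<le> x\<^sup>2/2"
    by (simp add: ln_mult power2_eq_square)
  then show ?thesis using \<open>cosh x > 0\<close> by (metis exp_ln exp_le_cancel_iff)
qed

definition sinhc :: "real \<Rightarrow> real" where "sinhc u = (if u = 0 then 1 else sinh u / u)"

lemma sinhc_bounds: fixes u :: real assumes "u \<ge> 0" shows "0 \<le> sinhc u" "sinhc u \<le> cosh u"
proof -
  have "0 \<le> sinhc u \<and> sinhc u \<le> cosh u"
  proof (cases "u = 0")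
    case True then show ?thesis by (simp add: sinhc_def)
  next
    case False
    then have u: "u > 0" using assms by simp
    have "\<exists>z>0. z < u \<and> sinh u - sinh 0 = (u - 0) * cosh z"
      by (rule MVT2) (use u in \<open>auto intro!: derivative_eq_intros\<close>)
    then obtain z where z: "0 < z" "z < u" "sinh u - sinh 0 = (u - 0) * cosh z" by blast
    have "cosh z \<le> cosh u" using z cosh_real_nonneg_le_iff by simp
    moreover have "sinh u / u = cosh z" using z u by simp
    ultimately show ?thesis using False by (simp add: sinhc_def)
  qed
  then show "0 \<le> sinhc u" "sinhc u \<le> cosh u" by auto
qed

lemma exp_le_lin:
  fixes t u :: real assumes "\<bar>t\<bar> \<le> u" shows "exp t \<le> cosh u + t * sinhc u"
proof (cases "u = 0")
  case True then show ?thesis using assms by (simp add: sinhc_def)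
next
  case False
  then have u: "u > 0" using assms by simp
  define l where "l = (1 + t/u)/2"
  have l: "0 \<le> l" "l \<le> 1" using assms u by (auto simp: l_def field_simps abs_le_iff)
  have t: "t = (1 - l) * (-u) + l * u" using u by (simp add: l_def field_simps)
  have "exp t \<le> (1 - l) * exp (-u) + l * exp u"
    using convex_onD[OF convex_on_exp[of 1], of l "-u" u] l unfolding t by simp
  also have "\<dots> = cosh u + t * sinhc u"
    using u False by (simp add: sinhc_def l_def cosh_def sinh_def field_simps)
  finally show ?thesis .
qed

lemma key_lemma:
  fixes Z :: "'w \<Rightarrow> real" and r :: "'h \<Rightarrow> real"
  assumes P: "prob_space M"
    and F: "subalgebra M F" and Gs: "subalgebra M Gs"
    and Zm: "Z \<in> borel_measurable F" and Z0: "\<forall>\<omega>\<in>space M. 0 \<le> Z \<omega>" and ZC: "\<forall>\<omega>\<in>space M. Z \<omega> \<le> C"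
    and Hm[measurable]: "H \<in> measurable M SH" and rm[measurable]: "r \<in> borel_measurable SH"
    and ri: "integrable M (\<lambda>\<omega>. r (H \<omega>))"
    and mk: "\<forall>B\<in>sets SH. AE \<omega> in M. real_cond_exp M F (\<lambda>x. indicator B (H x)) \<omega> = real_cond_exp M Gs (\<lambda>x. indicator B (H x)) \<omega>"
    and neg: "AE \<omega> in M. real_cond_exp M Gs (\<lambda>x. r (H x)) \<omega> \<le> 0"
  shows "(\<integral>\<omega>. Z \<omega> * r (H \<omega>) \<partial>M) \<le> 0"
proof -
  interpret prob_space M by (rule P)
  interpret FF: finite_measure_subalgebra M F by unfold_locales (rule F)
  interpret GG: finite_measure_subalgebra M Gs by unfold_locales (rule Gs)
  have Zm'[measurable]: "Z \<in> borel_measurable M" by (rule measurable_from_subalg[OF F Zm])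
  have C0: "0 \<le> C" using not_empty Z0 ZC by force
  have Zint: "integrable M Z"
    by (rule integrable_const_bound[where B=C]) (use Z0 ZC C0 in auto)
  define W where "W = real_cond_exp M Gs Z"
  have WmG[measurable]: "W \<in> borel_measurable Gs" unfolding W_def by simp
  have Wm[measurable]: "W \<in> borel_measurable M" unfolding W_def by simp
  have W0: "AE \<omega> in M. 0 \<le> W \<omega>" unfolding W_def
    by (rule GG.real_cond_exp_pos) (use Z0 in auto)
  have WC: "AE \<omega> in M. W \<omega> \<le> C" unfolding W_def
    by (rule GG.real_cond_exp_le_c) (use Zint ZC in auto)
  have eqB: "(\<integral>x. Z x * indicator B (H x) \<partial>M) = (\<integral>x. W x * indicator B (H x) \<partial>M)"
    if B: "B \<in> sets SH" for B
  proof -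
    note [measurable] = B
    define IB where "IB = (\<lambda>x. indicator B (H x) :: real)"
    have IBm[measurable]: "IB \<in> borel_measurable M" unfolding IB_def using B by measurable
    have IBint: "integrable M IB"
      by (rule integrable_const_bound[where B=1]) (use IBm in \<open>auto simp: IB_def indicator_def\<close>)
    define EG where "EG = real_cond_exp M Gs IB"
    have EGm[measurable]: "EG \<in> borel_measurable Gs" "EG \<in> borel_measurable M" unfolding EG_def by simp_all
    have EG0: "AE x in M. 0 \<le> EG x" unfolding EG_def
      using GG.real_cond_exp_pos[OF _ IBm] by (simp add: IB_def)
    have EG1: "AE x in M. EG x \<le> 1" unfolding EG_def
      by (rule GG.real_cond_exp_le_c) (use IBint in \<open>auto simp: IB_def indicator_def\<close>)
    have i1: "integrable M (\<lambda>x. Z x * IB x)"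
      by (rule integrable_const_bound[where B=C]) (use Z0 ZC C0 in \<open>auto simp: IB_def indicator_def\<close>)
    have "(\<integral>x. Z x * IB x \<partial>M) = (\<integral>x. Z x * real_cond_exp M F IB x \<partial>M)"
      by (rule FF.real_cond_exp_intg(2)[symmetric]) (use i1 Zm in auto)
    also have "\<dots> = (\<integral>x. Z x * EG x \<partial>M)"
      unfolding EG_def IB_def
      by (rule integral_cong_AE) (use mk B in auto)
    also have "\<dots> = (\<integral>x. EG x * W x \<partial>M)"
    proof -
      have "AE x in M. norm (EG x * Z x) \<le> C"
        using EG0 EG1 AE_space
      proof eventually_elim
        case (elim x)
        then have "EG x * Z x \<le> 1 * C" using Z0 ZC by (intro mult_mono) auto
        then show ?case using elim Z0 by (simp add: abs_mult)
      qed
      then have i2: "integrable M (\<lambda>x. EG x * Z x)"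
        by (rule integrable_const_bound) simp
      show ?thesis unfolding W_def
        using GG.real_cond_exp_intg(2)[OF i2] by (simp add: mult.commute)
    qed
    also have "\<dots> = (\<integral>x. W x * IB x \<partial>M)"
    proof -
      have i3: "integrable M (\<lambda>x. W x * IB x)"
        by (rule integrable_const_bound[where B=C]) (use W0 WC C0 in \<open>auto simp: IB_def indicator_def\<close>)
      show ?thesis unfolding EG_def
        using GG.real_cond_exp_intg(2)[OF i3] by (simp add: mult.commute)
    qed
    finally show ?thesis by (simp add: IB_def)
  qed
  define N1 where "N1 = distr (density M (\<lambda>x. ennreal (Z x))) SH H"
  define N2 where "N2 = distr (density M (\<lambda>x. ennreal (W x))) SH H"
  have "N1 = N2"
  proof (rule measure_eqI)
    show "sets N1 = sets N2" by (simp add: N1_def N2_def)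
    fix B assume "B \<in> sets N1"
    then have B[measurable]: "B \<in> sets SH" by (simp add: N1_def)
    have "emeasure N1 B = (\<integral>\<^sup>+x. ennreal (Z x * indicator B (H x)) \<partial>M)"
      unfolding N1_def
      by (simp add: emeasure_distr emeasure_density, intro nn_integral_cong)
         (simp add: indicator_def)
    also have "\<dots> = ennreal (\<integral>x. Z x * indicator B (H x) \<partial>M)"
      by (rule nn_integral_eq_integral)
        (use Z0 ZC C0 in \<open>auto intro!: integrable_const_bound[where B=C] simp: indicator_def\<close>)
    also have "\<dots> = ennreal (\<integral>x. W x * indicator B (H x) \<partial>M)" using eqB[OF B] by simp
    also have "\<dots> = (\<integral>\<^sup>+x. ennreal (W x * indicator B (H x)) \<partial>M)"
      by (rule nn_integral_eq_integral[symmetric])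
        (use W0 WC C0 in \<open>auto intro!: integrable_const_bound[where B=C] simp: indicator_def\<close>)
    also have "\<dots> = emeasure N2 B"
      unfolding N2_def
      by (simp add: emeasure_distr emeasure_density, intro nn_integral_cong)
         (simp add: indicator_def)
    finally show "emeasure N1 B = emeasure N2 B" .
  qed
  have iZ: "integrable M (\<lambda>x. Z x * r (H x))"
  proof -
    have "integrable M (\<lambda>x. C * r (H x))" using ri by simp
    then show ?thesis
    by (rule Bochner_Integration.integrable_bound) (use Z0 ZC C0 in \<open>auto simp: abs_mult intro!: mult_right_mono\<close>)
  qed
  have "integrable N1 r"
    unfolding N1_def by (subst integrable_distr_eq) (auto simp: integrable_density iZ Z0)
  then have "integrable N2 r" using \<open>N1 = N2\<close> by simp
  then have iW: "integrable M (\<lambda>x. W x * r (H x))"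
    unfolding N2_def by (subst (asm) integrable_distr_eq) (auto simp: integrable_density W0)
  have "(\<integral>x. Z x * r (H x) \<partial>M) = integral\<^sup>L N1 r"
    unfolding N1_def by (simp add: integral_distr integral_density Z0)
  also have "\<dots> = integral\<^sup>L N2 r" using \<open>N1 = N2\<close> by simp
  also have "\<dots> = (\<integral>x. W x * r (H x) \<partial>M)"
    unfolding N2_def by (simp add: integral_distr integral_density W0)
  also have "\<dots> = (\<integral>x. W x * real_cond_exp M Gs (\<lambda>x. r (H x)) x \<partial>M)"
    by (rule GG.real_cond_exp_intg(2)[symmetric]) (use iW in auto)
  also have "\<dots> \<le> (\<integral>x. 0 \<partial>M)"
    by (rule integral_mono_AE) (use GG.real_cond_exp_intg(1)[OF iW] W0 neg in \<open>auto intro: mult_nonneg_nonpos\<close>)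
  finally show ?thesis by simp
qed

lemma pointwise:
  fixes a s x y :: real
  assumes a: "a > 0" and x: "x \<ge> 0" and y: "\<bar>y\<bar> \<le> a * sqrt x" and s: "s = 2 / a\<^sup>2"
  shows "exp (s * (y - x)) \<le> 1 + (exp (- s * x) * s * sinhc (s * (a * sqrt x))) * y"
    "0 \<le> exp (- s * x) * s * sinhc (s * (a * sqrt x))"
    "exp (- s * x) * s * sinhc (s * (a * sqrt x)) \<le> s"
    "exp (s * (y - x)) \<le> exp (1/2)"
proof -
  define u where "u = s * (a * sqrt x)"
  have s0: "s > 0" using a s by simp
  have u0: "u \<ge> 0" using s0 a x by (simp add: u_def)
  have usq: "u\<^sup>2 / 2 = s * x"
    using a x by (simp add: u_def s power_mult_distrib power2_eq_square field_simps)
  have ch: "exp (- s * x) * cosh u \<le> 1"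
  proof -
    have "exp (- s * x) * cosh u \<le> exp (- s * x) * exp (u\<^sup>2/2)"
      using cosh_le_exp_sq[OF u0] by simp
    also have "\<dots> = 1" using usq by (simp flip: exp_add)
    finally show ?thesis .
  qed
  have ty: "\<bar>s * y\<bar> \<le> u" using y s0 by (simp add: u_def abs_mult)
  have "exp (s * (y - x)) = exp (- s * x) * exp (s * y)"
    by (simp add: algebra_simps flip: exp_add)
  also have "\<dots> \<le> exp (- s * x) * (cosh u + (s * y) * sinhc u)"
    using exp_le_lin[OF ty] by simp
  also have "\<dots> = exp (- s * x) * cosh u + (exp (- s * x) * s * sinhc u) * y"
    by (simp add: algebra_simps)
  also have "\<dots> \<le> 1 + (exp (- s * x) * s * sinhc u) * y" using ch by simp
  finally show "exp (s * (y - x)) \<le> 1 + (exp (- s * x) * s * sinhc (s * (a * sqrt x))) * y"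
    by (simp add: u_def)
  show "0 \<le> exp (- s * x) * s * sinhc (s * (a * sqrt x))"
    using sinhc_bounds(1)[OF u0] s0 by (simp add: u_def)
  have "exp (- s * x) * s * sinhc u \<le> exp (- s * x) * s * cosh u"
    using sinhc_bounds(2)[OF u0] s0 by simp
  also have "\<dots> = s * (exp (- s * x) * cosh u)" by simp
  also have "\<dots> \<le> s * 1" using ch s0 by (intro mult_left_mono) auto
  finally show "exp (- s * x) * s * sinhc (s * (a * sqrt x)) \<le> s" by (simp add: u_def)
  have "s * (y - x) \<le> s * (a * sqrt x - x)" using y s0 by (intro mult_left_mono) auto
  also have "a * sqrt x - x = sqrt x * (a - sqrt x)" using x by (simp add: algebra_simps)
  also have "s * (sqrt x * (a - sqrt x)) \<le> s * (a\<^sup>2 / 4)"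
    using mult_const_minus_self_real_le[of "sqrt x" a] s0 by (intro mult_left_mono) auto
  also have "\<dots> = 1/2" using a by (simp add: s)
  finally show "exp (s * (y - x)) \<le> exp (1/2)" by simp
qed

lemma borel_measurable_sinhc: "sinhc \<in> borel_measurable borel"
proof -
  have [measurable]: "sinh \<in> borel_measurable (borel :: real measure)"
    by (intro borel_measurable_continuous_onI continuous_intros)
  show ?thesis unfolding sinhc_def by measurable
qed

lemma subalg_vimage:
  assumes "f \<in> measurable M N"
  shows "subalgebra M (vimage_algebra (space M) f N)"
  unfolding subalgebra_def
proof
  show "sets (vimage_algebra (space M) f N) \<subseteq> sets M"
    using assms measurable_space[OF assms]
    by (auto simp: sets_vimage_algebra2 Pi_iff intro: measurable_sets)
qed simp

lemma past_facts:
  assumes Gm: "\<And>j. j \<le> i \<Longrightarrow> G j \<in> measurable M SG"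
    and Hm: "\<And>j. j < i \<Longrightarrow> H j \<in> measurable M SH"
  shows "subalgebra M (past_before_H M SG SH G H i)"
    and "\<And>j. j \<le> i \<Longrightarrow> G j \<in> measurable (past_before_H M SG SH G H i) SG"
    and "\<And>j. j < i \<Longrightarrow> H j \<in> measurable (past_before_H M SG SH G H i) SH"
proof -
  let ?X = "{G j -` A \<inter> space M | j A. j \<le> i \<and> A \<in> sets SG} \<union>
      {H j -` B \<inter> space M | j B. j < i \<and> B \<in> sets SH}"
  have XP: "?X \<subseteq> Pow (space M)" by auto
  have XM: "?X \<subseteq> sets M" using Gm Hm by (auto intro: measurable_sets)
  have sp: "space (past_before_H M SG SH G H i) = space M"
    unfolding past_before_H_def using XP by simp
  have st: "sets (past_before_H M SG SH G H i) = sigma_sets (space M) ?X"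
    unfolding past_before_H_def using XP by (simp add: sets_measure_of)
  show "subalgebra M (past_before_H M SG SH G H i)"
    unfolding subalgebra_def sp st using XM by (simp add: sets.sigma_sets_subset)
  show "G j \<in> measurable (past_before_H M SG SH G H i) SG" if "j \<le> i" for j
  proof (rule measurableI)
    fix x assume "x \<in> space (past_before_H M SG SH G H i)"
    then show "G j x \<in> space SG" using measurable_space[OF Gm[OF that]] sp by simp
  next
    fix A assume "A \<in> sets SG"
    then have "G j -` A \<inter> space M \<in> ?X" using that by blast
    then show "G j -` A \<inter> space (past_before_H M SG SH G H i) \<in> sets (past_before_H M SG SH G H i)"
      unfolding sp st by (rule sigma_sets.Basic)
  qed
  show "H j \<in> measurable (past_before_H M SG SH G H i) SH" if "j < i" for j
  proof (rule measurableI)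
    fix x assume "x \<in> space (past_before_H M SG SH G H i)"
    then show "H j x \<in> space SH" using measurable_space[OF Hm[OF that]] sp by simp
  next
    fix A assume "A \<in> sets SH"
    then have "H j -` A \<inter> space M \<in> ?X" using that by blast
    then show "H j -` A \<inter> space (past_before_H M SG SH G H i) \<in> sets (past_before_H M SG SH G H i)"
      unfolding sp st by (rule sigma_sets.Basic)
  qed
qed

theorem lemma3:
  fixes M :: "'w measure" and SG :: "'g measure" and SH :: "'h measure"
    and G :: "nat \<Rightarrow> 'w \<Rightarrow> 'g" and H :: "nat \<Rightarrow> 'w \<Rightarrow> 'h"
    and v :: "'g \<Rightarrow> real" and r :: "'h \<Rightarrow> real" and a :: real and n :: nat and lam :: real
  assumes "prob_space M"
    and "alt_markov_chain M SG SH n G H"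
    and "v \<in> borel_measurable SG" and "\<forall>x\<in>space SG. v x \<ge> 0"
    and "r \<in> borel_measurable SH"
    and "a > 0"
    and "\<forall>i<n. \<forall>\<omega>\<in>space M. \<bar>r (H i \<omega>)\<bar> \<le> a * sqrt (v (G i \<omega>))"
    and "\<forall>i<n. integrable M (\<lambda>\<omega>. r (H i \<omega>))"
    and "\<forall>i<n. AE \<omega> in M. real_cond_exp M (vimage_algebra (space M) (G i) SG) (\<lambda>x. r (H i x)) \<omega> \<le> 0"
    and "lam > 0"
  shows "measure M {\<omega>\<in>space M. (\<Sum>i<n. r (H i \<omega>) - v (G i \<omega>)) \<ge> lam}
           \<le> exp (- (2 / a\<^sup>2) * lam)"
proof -
  note P = assms(1) and vm = assms(3) and v0 = assms(4) and rm = assms(5) and a = assms(6)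
    and rb = assms(7) and ri = assms(8) and neg = assms(9) and lam = assms(10)
  interpret prob_space M by (rule P)
  have Gm: "\<And>i. i < n \<Longrightarrow> G i \<in> measurable M SG"
    and Hm: "\<And>i. i < n \<Longrightarrow> H i \<in> measurable M SH"
    and mk: "\<And>i. i < n \<Longrightarrow> \<forall>B\<in>sets SH. AE \<omega> in M.
         real_cond_exp M (past_before_H M SG SH G H i) (\<lambda>x. indicator B (H i x)) \<omega> =
         real_cond_exp M (vimage_algebra (space M) (G i) SG) (\<lambda>x. indicator B (H i x)) \<omega>"
    using assms(2) unfolding alt_markov_chain_def by auto
  define s where "s = 2 / a\<^sup>2"
  have s0: "s > 0" using a by (simp add: s_def)
  define X where "X = (\<lambda>i \<omega>. r (H i \<omega>) - v (G i \<omega>))"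
  define E where "E = (\<lambda>k \<omega>. exp (s * (\<Sum>i<k. X i \<omega>)))"
  define \<psi> where "\<psi> = (\<lambda>i \<omega>. exp (- s * v (G i \<omega>)) * s * sinhc (s * (a * sqrt (v (G i \<omega>)))))"
  have vG0: "\<And>i \<omega>. i < n \<Longrightarrow> \<omega> \<in> space M \<Longrightarrow> v (G i \<omega>) \<ge> 0"
    using v0 measurable_space[OF Gm] by blast
  note pw = pointwise[OF a vG0 rb[rule_format] s_def]
  have Esuc: "E (Suc k) \<omega> = E k \<omega> * exp (s * X k \<omega>)" for k \<omega>
    by (simp add: E_def algebra_simps flip: exp_add)
  have Epos: "E k \<omega> > 0" for k \<omega> by (simp add: E_def)
  have Ebd: "\<forall>\<omega>\<in>space M. E k \<omega> \<le> exp (real k / 2)" if "k \<le> n" for k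
    using that
  proof (induction k)
    case 0 then show ?case by (simp add: E_def)
  next
    case (Suc k)
    show ?case
    proof
      fix \<omega> assume w: "\<omega> \<in> space M"
      have "E (Suc k) \<omega> = E k \<omega> * exp (s * X k \<omega>)" by (rule Esuc)
      also have "\<dots> \<le> exp (real k / 2) * exp (1/2)"
        using Suc w pw(4)[of k \<omega>] Epos[of k \<omega>] by (intro mult_mono) (auto simp: X_def s_def)
      also have "\<dots> = exp (real (Suc k) / 2)" by (simp add: field_simps flip: exp_add)
      finally show "E (Suc k) \<omega> \<le> exp (real (Suc k) / 2)" .
    qed
  qed
  have XM: "X i \<in> borel_measurable M" if "i < n" for i
    unfolding X_def using measurable_compose[OF Hm[OF that] rm] measurable_compose[OF Gm[OF that] vm]
    by measurable
  have Emeas: "E k \<in> borel_measurable M" if "k \<le> n" for k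
  proof -
    have [measurable]: "(\<lambda>\<omega>. \<Sum>i<k. X i \<omega>) \<in> borel_measurable M"
      by (rule borel_measurable_sum) (use XM that in auto)
    show ?thesis unfolding E_def by measurable
  qed
  have Eint: "integrable M (E k)" if "k \<le> n" for k
    by (rule integrable_const_bound[where B="exp (real k / 2)"])
       (use Ebd[OF that] Epos Emeas[OF that] in \<open>auto intro!: AE_I2 simp: abs_of_pos\<close>)
  have Eint1: "(\<integral>\<omega>. E k \<omega> \<partial>M) \<le> 1" if "k \<le> n" for k
    using that
  proof (induction k)
    case 0 then show ?case by (simp add: E_def prob_space)
  next
    case (Suc k)
    then have k: "k < n" by simp
    define F where "F = past_before_H M SG SH G H k"
    have PF: "subalgebra M F" "\<And>j. j \<le> k \<Longrightarrow> G j \<in> measurable F SG"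
        "\<And>j. j < k \<Longrightarrow> H j \<in> measurable F SH"
      using past_facts[of k G M SG H SH] Gm Hm k unfolding F_def by auto
    define Z where "Z = (\<lambda>\<omega>. E k \<omega> * \<psi> k \<omega>)"
    have XF: "X i \<in> borel_measurable F" if "i < k" for i
    proof -
      have "i \<le> k" using that by simp
      then show ?thesis
      unfolding X_def using measurable_compose[OF PF(3)[OF that] rm] measurable_compose[OF PF(2)[of i] vm]
      by measurable
    qed
    have [measurable]: "(\<lambda>\<omega>. \<Sum>i<k. X i \<omega>) \<in> borel_measurable F"
      by (rule borel_measurable_sum) (use XF in auto)
    have [measurable]: "(\<lambda>\<omega>. v (G k \<omega>)) \<in> borel_measurable F"
      using measurable_compose[OF PF(2) vm] by simp
    note [measurable] = borel_measurable_sinhc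
    have Zm: "Z \<in> borel_measurable F"
      unfolding Z_def E_def \<psi>_def by measurable
    have ZM[measurable]: "Z \<in> borel_measurable M" by (rule measurable_from_subalg[OF PF(1) Zm])
    have Z0: "\<forall>\<omega>\<in>space M. 0 \<le> Z \<omega>"
    proof
      fix \<omega> assume w: "\<omega> \<in> space M"
      have "0 \<le> \<psi> k \<omega>" using pw(2)[OF k w k w] by (simp add: \<psi>_def)
      then show "0 \<le> Z \<omega>" using Epos[of k \<omega>] by (simp add: Z_def)
    qed
    have ZC: "\<forall>\<omega>\<in>space M. Z \<omega> \<le> exp (real k / 2) * s"
    proof
      fix \<omega> assume w: "\<omega> \<in> space M"
      show "Z \<omega> \<le> exp (real k / 2) * s"
        unfolding Z_def using Ebd[of k] Suc.prems w pw(2,3)[OF k w k w] Epos[of k \<omega>]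
        by (intro mult_mono) (auto simp: \<psi>_def)
    qed
    have KL: "(\<integral>\<omega>. Z \<omega> * r (H k \<omega>) \<partial>M) \<le> 0"
      by (rule key_lemma[OF P PF(1) subalg_vimage[OF Gm[OF k]] Zm Z0 ZC Hm[OF k] rm
            ri[rule_format, OF k] mk[OF k, folded F_def] neg[rule_format, OF k]])
    have iZ: "integrable M (\<lambda>x. Z x * r (H k x))"
    proof -
      have "integrable M (\<lambda>x. (exp (real k / 2) * s) * r (H k x))" using ri k by simp
      then show ?thesis
        by (rule Bochner_Integration.integrable_bound)
          (use Z0 ZC s0 measurable_compose[OF Hm[OF k] rm] in \<open>auto simp: abs_mult intro!: mult_right_mono AE_I2\<close>)
    qed
    have le: "E (Suc k) \<omega> \<le> E k \<omega> + Z \<omega> * r (H k \<omega>)" if w: "\<omega> \<in> space M" for \<omega>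
    proof -
      have "E (Suc k) \<omega> = E k \<omega> * exp (s * X k \<omega>)" by (rule Esuc)
      also have "\<dots> \<le> E k \<omega> * (1 + \<psi> k \<omega> * r (H k \<omega>))"
        using pw(1)[OF k w k w] Epos[of k \<omega>] by (intro mult_left_mono) (auto simp: X_def \<psi>_def)
      also have "\<dots> = E k \<omega> + Z \<omega> * r (H k \<omega>)" by (simp add: Z_def algebra_simps)
      finally show ?thesis .
    qed
    have "(\<integral>\<omega>. E (Suc k) \<omega> \<partial>M) \<le> (\<integral>\<omega>. E k \<omega> + Z \<omega> * r (H k \<omega>) \<partial>M)"
      by (rule integral_mono) (use Eint[OF Suc.prems] Eint[of k] Suc.prems iZ le in auto)
    also have "\<dots> = (\<integral>\<omega>. E k \<omega> \<partial>M) + (\<integral>\<omega>. Z \<omega> * r (H k \<omega>) \<partial>M)"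
      by (rule Bochner_Integration.integral_add) (use Eint[of k] k iZ in auto)
    also have "\<dots> \<le> 1 + 0" using Suc.IH k KL by (intro add_mono) auto
    finally show ?case by simp
  qed
  have seteq: "{\<omega>\<in>space M. (\<Sum>i<n. r (H i \<omega>) - v (G i \<omega>)) \<ge> lam}
      = {\<omega>\<in>space M. E n \<omega> \<ge> exp (s * lam)}"
    using s0 by (auto simp: E_def X_def)
  have "measure M {\<omega>\<in>space M. E n \<omega> \<ge> exp (s * lam)} \<le> (\<integral>\<omega>. E n \<omega> \<partial>M) / exp (s * lam)"
    by (rule integral_Markov_inequality_measure[OF Eint[of n] sets.top])
       (use Epos in \<open>auto intro!: AE_I2 less_imp_le\<close>)
  also have "\<dots> \<le> 1 / exp (s * lam)"
    using Eint1[of n] by (intro divide_right_mono) auto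
  also have "\<dots> = exp (- (2 / a\<^sup>2) * lam)" by (simp add: s_def exp_minus field_simps)
  finally show ?thesis using seteq by simp
qed

end
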